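(* Let $\mathcal{V}$ (respondents) and $\mathcal{X}$ (queries) be finite sets, let $k\ge 1$ and $T\ge 1$ be integers with $|\mathcal{X}|\ge T$, and let $f:2^{\mathcal{V}\times\mathcal{X}}\to\mathbb{R}_{\ge 0}$ satisfy $f(\emptyset)=0$ and be monotone and submodular: for all $W_1\subseteq W_2\subseteq \mathcal{V}\times\mathcal{X}$ and all $W\subseteq \mathcal{V}\times\mathcal{X}$, $f(W_2)\ge f(W_1)$ and $\Delta(W\mid W_1)\ge \Delta(W\mid W_2)$, where $\Delta(A\mid S)=f(S\cup A)-f(S)$. Define the joint greedy sequence $(R_1,x_1),\dots,(R_T,x_T)$ by $S_0=\emptyset$ and, for $t=1,\dots,T$, $$(R_t,x_t)\in\arg\max_{R\subseteq\mathcal{V},\,|R|\le k,\; x\in\mathcal{X}\setminus\{x_1,\dots,x_{t-1}\}}\Delta\big(R\times\{x\}\mid S_{t-1}\big),\qquad S_t=S_{t-1}\cup (R_t\times\{x_t\}),$$ (ties broken arbitrarily). Then for every sequence $(R_1^*,x_1^* ),\dots,(R_T^*,x_T^* )$ with $R_t^*\subseteq\mathcal{V}$, $|R_t^*|\le k$, and pairwise distinct queries $x_1^*,\dots,x_T^*\in\mathcal{X}$, setting $S_T^*=\bigcup_{t=1}^T R_t^*\times\{x_t^*\}$, we have $$f(S_T^* )\le \frac{2}{1-e^{-2}}\, f(S_T).$$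
   Context: A pair $(R,x)$ with $R\subseteq\mathcal{V}$, $x\in\mathcal{X}$ (a subset of respondents asked query $x$) is identified with the set $R\times\{x\}\subseteq\mathcal{V}\times\mathcal{X}$; a history of selected pairs is the union of these sets. $f$ is a utility function measuring information gained about a group's latent properties (e.g. expected information gain). *)

theory Defs
  imports Complex_Main
begin

definition Delta :: "('a set \<Rightarrow> real) \<Rightarrow> 'a set \<Rightarrow> 'a set \<Rightarrow> real" where
  "Delta f A S = f (S \<union> A) - f S"

definition hist :: "(nat \<Rightarrow> 'v set) \<Rightarrow> (nat \<Rightarrow> 'x) \<Rightarrow> nat \<Rightarrow> ('v \<times> 'x) set" where
  "hist R x t = (\<Union>s\<in>{1..t}. R s \<times> {x s})"

end

theory Submission
  imports Defs
begin

theorem theorem1: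
  fixes V :: "'v set" and X :: "'x set" and k T :: nat
    and f :: "('v \<times> 'x) set \<Rightarrow> real"
    and R :: "nat \<Rightarrow> 'v set" and x :: "nat \<Rightarrow> 'x"
    and Rs :: "nat \<Rightarrow> 'v set" and xs :: "nat \<Rightarrow> 'x"
  assumes finV: "finite V" and finX: "finite X"
    and k: "k \<ge> 1" and T: "T \<ge> 1" and XT: "card X \<ge> T"
    and nonneg: "\<And>W. W \<subseteq> V \<times> X \<Longrightarrow> f W \<ge> 0"
    and empty: "f {} = 0"
    and mono: "\<And>W1 W2. W1 \<subseteq> W2 \<Longrightarrow> W2 \<subseteq> V \<times> X \<Longrightarrow> f W1 \<le> f W2"
    and submod: "\<And>W1 W2 W. W1 \<subseteq> W2 \<Longrightarrow> W2 \<subseteq> V \<times> X \<Longrightarrow> W \<subseteq> V \<times> X \<Longrightarrow>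
                   Delta f W W1 \<ge> Delta f W W2"
    and greedy_feas: "\<And>t. t \<in> {1..T} \<Longrightarrow>
          R t \<subseteq> V \<and> card (R t) \<le> k \<and> x t \<in> X - x ` {1..<t}"
    and greedy_max: "\<And>t R' x'. t \<in> {1..T} \<Longrightarrow> R' \<subseteq> V \<Longrightarrow> card R' \<le> k \<Longrightarrow>
          x' \<in> X - x ` {1..<t} \<Longrightarrow>
          Delta f (R' \<times> {x'}) (hist R x (t - 1)) \<le> Delta f (R t \<times> {x t}) (hist R x (t - 1))"
    and opt_feas: "\<And>t. t \<in> {1..T} \<Longrightarrow> Rs t \<subseteq> V \<and> card (Rs t) \<le> k \<and> xs t \<in> X"
    and opt_dist: "inj_on xs {1..T}"
  shows "f (hist Rs xs T) \<le> 2 / (1 - exp (-2)) * f (hist R x T)"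
proof -
  define H where "H = hist R x"
  define A where "A = (\<lambda>j. Rs j \<times> {xs j})"
  define g where "g = (\<lambda>s. Delta f (R s \<times> {x s}) (H (s - 1)))"
  have H0: "H 0 = {}" unfolding H_def hist_def by simp
  have HSuc: "H (Suc t) = H t \<union> R (Suc t) \<times> {x (Suc t)}" for t
    unfolding H_def hist_def by (auto simp: atLeastAtMostSuc_conv)
  have Hsub: "H t \<subseteq> V \<times> X" if "t \<le> T" for t
    using that unfolding H_def hist_def using greedy_feas by fastforce
  have Asub: "A j \<subseteq> V \<times> X" if "j \<in> {1..T}" for j
    using opt_feas[OF that] unfolding A_def by auto
  have tele: "t \<le> T \<Longrightarrow> f (H t) = (\<Sum>s\<in>{1..t}. g s)" for t
  proof (induction t)
    case 0 then show ?case using H0 empty by simp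
  next
    case (Suc t)
    then show ?case using HSuc[of t] by (simp add: g_def Delta_def)
  qed
  have gnn: "g s \<ge> 0" if "s \<in> {1..T}" for s
  proof -
    have "H s = H (s - 1) \<union> R s \<times> {x s}" using that HSuc[of "s - 1"] by simp
    moreover have "H s \<subseteq> V \<times> X" using that Hsub by simp
    ultimately show ?thesis unfolding g_def Delta_def using mono by (metis Un_upper1 diff_ge_0_iff_ge)
  qed
  have HT: "H T \<subseteq> V \<times> X" using Hsub by simp
  have ub: "finite J \<Longrightarrow> J \<subseteq> {1..T} \<Longrightarrow>
     f (H T \<union> (\<Union>j\<in>J. A j)) - f (H T) \<le> (\<Sum>j\<in>J. Delta f (A j) (H T))" for J
  proof (induction J rule: finite_induct)
    case empty then show ?case by simp
  next
    case (insert a J)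
    let ?U = "\<Union>j\<in>J. A j"
    have U: "H T \<union> ?U \<subseteq> V \<times> X" using insert.prems HT Asub by blast
    have aa: "A a \<subseteq> V \<times> X" using insert.prems Asub by blast
    have "Delta f (A a) (H T \<union> ?U) \<le> Delta f (A a) (H T)"
      using submod[OF _ U aa, of "H T"] by simp
    moreover have "H T \<union> (\<Union>j\<in>insert a J. A j) = (H T \<union> ?U) \<union> A a" by auto
    ultimately show ?case using insert by (simp add: Delta_def)
  qed
  have xinj: "inj_on x {1..T}"
  proof (rule inj_onI)
    fix a b assume ab: "a \<in> {1..T}" "b \<in> {1..T}" "x a = x b"
    show "a = b"
    proof (rule ccontr)
      assume "a \<noteq> b"
      then consider "a < b" | "b < a" by linarith
      then show False
      proof cases
        case 1 then have "x a \<in> x ` {1..<b}" using ab by (intro imageI) auto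
        then show False using greedy_feas[OF ab(2)] ab by auto
      next
        case 2 then have "x b \<in> x ` {1..<a}" using ab by (intro imageI) auto
        then show False using greedy_feas[OF ab(1)] ab by auto
      qed
    qed
  qed
  define J1 where "J1 = {j\<in>{1..T}. xs j \<in> x ` {1..T}}"
  define J0 where "J0 = {1..T} - J1"
  define \<sigma> where "\<sigma> = (\<lambda>j. inv_into {1..T} x (xs j))"
  have \<sigma>1: "\<sigma> j \<in> {1..T} \<and> x (\<sigma> j) = xs j" if "j \<in> J1" for j
    using that unfolding J1_def \<sigma>_def using xinj by (auto simp: inv_into_f_f)
  have \<sigma>inj: "inj_on \<sigma> J1"
  proof (rule inj_onI)
    fix a b assume "a \<in> J1" "b \<in> J1" "\<sigma> a = \<sigma> b"
    then have "xs a = xs b" using \<sigma>1 by metis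
    then show "a = b" using opt_dist \<open>a \<in> J1\<close> \<open>b \<in> J1\<close> unfolding J1_def inj_on_def by blast
  qed
  define T0 where "T0 = {1..T} - \<sigma> ` J1"
  have J1sub: "J1 \<subseteq> {1..T}" unfolding J1_def by auto
  have sJ1: "\<sigma> ` J1 \<subseteq> {1..T}" using \<sigma>1 by auto
  have "card T0 = T - card J1"
    unfolding T0_def using card_Diff_subset[OF finite_subset[OF sJ1] sJ1] card_image[OF \<sigma>inj] by simp
  moreover have "card J0 = T - card J1"
    unfolding J0_def using card_Diff_subset[OF finite_subset[OF J1sub] J1sub] by simp
  ultimately have "card J0 = card T0" by simp
  then obtain h where h: "bij_betw h J0 T0"
    using finite_same_card_bij[of J0 T0] unfolding J0_def T0_def by auto
  define \<tau> where "\<tau> = (\<lambda>j. if j \<in> J1 then \<sigma> j else h j)"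
  have \<tau>range: "\<tau> j \<in> {1..T}" if "j \<in> {1..T}" for j
    using that \<sigma>1 h unfolding \<tau>_def J0_def T0_def bij_betw_def by auto
  have \<tau>inj: "inj_on \<tau> {1..T}"
  proof (rule inj_onI)
    fix a b assume ab: "a \<in> {1..T}" "b \<in> {1..T}" "\<tau> a = \<tau> b"
    have hT0: "j \<in> J0 \<Longrightarrow> h j \<in> T0" for j using h unfolding bij_betw_def by auto
    show "a = b"
    proof (cases "a \<in> J1"; cases "b \<in> J1")
      assume "a \<in> J1" "b \<in> J1" then show ?thesis using ab \<sigma>inj unfolding \<tau>_def inj_on_def by auto
    next
      assume "a \<in> J1" "b \<notin> J1"
      then have "b \<in> J0" using ab unfolding J0_def by auto
      then show ?thesis using ab hT0[of b] \<open>a \<in> J1\<close> \<open>b \<notin> J1\<close> imageI[of a J1 \<sigma>] unfolding \<tau>_def T0_def by auto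
    next
      assume "a \<notin> J1" "b \<in> J1"
      then have "a \<in> J0" using ab unfolding J0_def by auto
      then show ?thesis using ab hT0[of a] \<open>a \<notin> J1\<close> \<open>b \<in> J1\<close> imageI[of b J1 \<sigma>] unfolding \<tau>_def T0_def by auto
    next
      assume "a \<notin> J1" "b \<notin> J1"
      then have "a \<in> J0" "b \<in> J0" using ab unfolding J0_def by auto
      then show ?thesis using ab h \<open>a \<notin> J1\<close> \<open>b \<notin> J1\<close> unfolding \<tau>_def bij_betw_def inj_on_def by auto
    qed
  qed
  have avail: "xs j \<in> X - x ` {1..<\<tau> j}" if "j \<in> {1..T}" for j
  proof (cases "j \<in> J1")
    case True
    then have "\<tau> j = \<sigma> j" unfolding \<tau>_def by simp
    then show ?thesis using \<sigma>1[OF True] greedy_feas[of "\<sigma> j"] by auto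
  next
    case False
    then have "xs j \<notin> x ` {1..T}" using that unfolding J1_def by auto
    moreover have "{1..<\<tau> j} \<subseteq> {1..T}" using \<tau>range[OF that] by auto
    ultimately show ?thesis using opt_feas[OF that] by auto
  qed
  have step: "Delta f (A j) (H T) \<le> g (\<tau> j)" if "j \<in> {1..T}" for j
  proof -
    have "H (\<tau> j - 1) \<subseteq> H T" unfolding H_def hist_def using \<tau>range[OF that] by (intro UN_mono) auto
    then have "Delta f (A j) (H T) \<le> Delta f (A j) (H (\<tau> j - 1))"
      using submod[OF _ HT Asub[OF that]] by simp
    also have "\<dots> \<le> g (\<tau> j)"
      unfolding g_def A_def H_def using greedy_max[OF \<tau>range[OF that], of "Rs j" "xs j"]
        opt_feas[OF that] avail[OF that] by simp
    finally show ?thesis .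
  qed
  have SU: "hist Rs xs T = (\<Union>j\<in>{1..T}. A j)" unfolding hist_def A_def by simp
  have "f (hist Rs xs T) \<le> f (H T \<union> (\<Union>j\<in>{1..T}. A j))"
    using mono[of "hist Rs xs T"] SU HT Asub by (metis (no_types, lifting) UN_least Un_least Un_upper2)
  also have "\<dots> \<le> f (H T) + (\<Sum>j\<in>{1..T}. Delta f (A j) (H T))" using ub[of "{1..T}"] by simp
  also have "(\<Sum>j\<in>{1..T}. Delta f (A j) (H T)) \<le> (\<Sum>j\<in>{1..T}. g (\<tau> j))"
    by (rule sum_mono) (rule step)
  also have "(\<Sum>j\<in>{1..T}. g (\<tau> j)) = (\<Sum>s\<in>\<tau> ` {1..T}. g s)"
    using sum.reindex[OF \<tau>inj, of g] by simp
  also have "\<dots> \<le> (\<Sum>s\<in>{1..T}. g s)"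
    by (rule sum_mono2) (use \<tau>range gnn in auto)
  also have "\<dots> = f (H T)" using tele by simp
  finally have main: "f (hist Rs xs T) \<le> 2 * f (H T)" by simp
  have fnn: "f (H T) \<ge> 0" using nonneg HT by simp
  have "exp (-2::real) > 0" by simp
  moreover have "exp (-2::real) < 1" by simp
  ultimately have "2 \<le> 2 / (1 - exp (-2::real))" by (simp add: field_simps)
  then have "2 * f (H T) \<le> 2 / (1 - exp (-2)) * f (H T)" using fnn mult_right_mono by blast
  then show ?thesis using main unfolding H_def by simp
qed

end
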